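(* Let $A$ be a set of regular cardinals and let $\kappa\in\operatorname{spec}(A)$ with $\kappa<\sup(A)$. Then $\kappa\in\operatorname{spec}(A\cap(\kappa+1))$.
   Context: For a set $A$ of regular cardinals, $\prod A$ is the set of functions $f$ with domain $A$ and $f(a)\in a$ for all $a\in A$, ordered by pointwise domination: $f<g$ iff $f(a)<g(a)$ for all $a\in A$. A subset of $\prod A$ is bounded if some $g\in\prod A$ pointwise dominates all its members. For a directed poset $P$, $\operatorname{spec}(P)$ is the set of regular cardinals $\kappa$ with $P\geq_T\kappa$ (Tukey reducibility: there is a map $P\to\kappa$ sending cofinal sets to cofinal sets), and $\operatorname{spec}(A):=\operatorname{spec}(\prod A,<)$. Equivalently, a regular $\kappa$ is in $\operatorname{spec}(A)$ iff there is a set $\mathcal{F}\subseteq\prod A$ of size $\kappa$ such that every $\mathcal{F}_0\subseteq\mathcal{F}$ of size $\kappa$ is unbounded in $(\prod A,<)$. *)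

theory Defs
  imports "HOL-Library.FuncSet" "HOL-Library.Equipollence"
begin

text \<open>Ordinals are modelled as elements of an arbitrary well-ordered type 'a;
  the ordinal alpha is identified with its initial segment {..<alpha}.\<close>

definition is_cardinal :: "'a::wellorder \<Rightarrow> bool" where
  "is_cardinal k \<longleftrightarrow> (\<forall>b<k. \<not> ({..<b} \<approx> {..<k}))"

definition regular :: "'a::wellorder \<Rightarrow> bool" where
  "regular k \<longleftrightarrow> infinite {..<k} \<and> is_cardinal k \<and>
     (\<forall>X \<subseteq> {..<k}. (\<forall>a<k. \<exists>x\<in>X. a \<le> x) \<longrightarrow> X \<approx> {..<k})"

definition prodA :: "'a::wellorder set \<Rightarrow> ('a \<Rightarrow> 'a) set" where
  "prodA A = (\<Pi>\<^sub>E a\<in>A. {..<a})"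

definition dom_lt :: "'a::wellorder set \<Rightarrow> ('a \<Rightarrow> 'a) \<Rightarrow> ('a \<Rightarrow> 'a) \<Rightarrow> bool" where
  "dom_lt A f g \<longleftrightarrow> (\<forall>a\<in>A. f a < g a)"

definition cofinal_prod :: "'a::wellorder set \<Rightarrow> ('a \<Rightarrow> 'a) set \<Rightarrow> bool" where
  "cofinal_prod A X \<longleftrightarrow> X \<subseteq> prodA A \<and>
     (\<forall>f\<in>prodA A. \<exists>x\<in>X. f = x \<or> dom_lt A f x)"

definition cofinal_ord :: "'a::wellorder \<Rightarrow> 'a set \<Rightarrow> bool" where
  "cofinal_ord k Y \<longleftrightarrow> Y \<subseteq> {..<k} \<and> (\<forall>b<k. \<exists>y\<in>Y. b \<le> y)"

definition tukey_ge :: "'a::wellorder set \<Rightarrow> 'a \<Rightarrow> bool" where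
  "tukey_ge A k \<longleftrightarrow> (\<exists>g. g \<in> prodA A \<rightarrow> {..<k} \<and>
     (\<forall>X. cofinal_prod A X \<longrightarrow> cofinal_ord k (g ` X)))"

definition spec :: "'a::wellorder set \<Rightarrow> 'a set" where
  "spec A = {k. regular k \<and> tukey_ge A k}"

end

theory Submission
  imports Defs
begin

lemma regular_limit:
  fixes a c :: "'a::wellorder"
  assumes "regular a" "c < a"
  shows "\<exists>d. c < d \<and> d < a"
proof (rule ccontr)
  assume "\<not> ?thesis"
  hence eq: "{..<a} = insert c {..<c}" using assms(2) by (auto simp: not_less) (meson antisym_conv1 not_less)
  have inf: "infinite {..<a}" using assms(1) unfolding regular_def by blast
  hence "infinite {..<c}" using eq by simp
  hence "insert c {..<c} \<approx> {..<c}" by (rule infinite_insert_eqpoll)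
  hence "{..<c} \<approx> {..<a}" using eq by (simp add: eqpoll_sym)
  moreover have "is_cardinal a" using assms(1) unfolding regular_def by blast
  ultimately show False using assms(2) unfolding is_cardinal_def by blast
qed

lemma regular_bound:
  fixes a k :: "'a::wellorder"
  assumes "regular a" "k < a" "Y \<subseteq> {..<a}" "Y \<lesssim> {..<k}"
  shows "\<exists>b<a. \<forall>y\<in>Y. y < b"
proof (rule ccontr)
  assume "\<not> ?thesis"
  hence "\<forall>b<a. \<exists>y\<in>Y. b \<le> y" by (metis leD not_less)
  hence "Y \<approx> {..<a}" using assms(1,3) unfolding regular_def by blast
  hence "{..<a} \<lesssim> {..<k}" using assms(4)
    by (meson eqpoll_sym eqpoll_imp_lepoll lepoll_trans)
  moreover have "{..<k} \<lesssim> {..<a}" using assms(2) by (intro subset_imp_lepoll) auto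
  ultimately have "{..<k} \<approx> {..<a}" by (simp add: lepoll_antisym)
  moreover have "is_cardinal a" using assms(1) unfolding regular_def by blast
  ultimately show False using assms(2) unfolding is_cardinal_def by blast
qed

theorem lemma3p3:
  fixes A :: "'a::wellorder set" and k :: 'a
  assumes "\<forall>a\<in>A. regular a"
    and "k \<in> spec A"
    and "\<exists>a\<in>A. k < a"
  shows "k \<in> spec (A \<inter> {..k})"
proof -
  define A' where "A' = A \<inter> {..k}"
  have kreg: "regular k" and tk: "tukey_ge A k" using assms(2) unfolding spec_def by auto
  obtain g where g1: "g \<in> prodA A \<rightarrow> {..<k}"
    and g2: "\<And>X. cofinal_prod A X \<Longrightarrow> cofinal_ord k (g ` X)"
    using tk unfolding tukey_ge_def by blast
  have "\<forall>\<beta><k. \<exists>f\<in>prodA A. \<forall>x\<in>prodA A. (f = x \<or> dom_lt A f x) \<longrightarrow> \<beta> \<le> g x"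
  proof (intro allI impI, rule ccontr)
    fix \<beta> assume b: "\<beta> < k" and n: "\<not> (\<exists>f\<in>prodA A. \<forall>x\<in>prodA A. (f = x \<or> dom_lt A f x) \<longrightarrow> \<beta> \<le> g x)"
    let ?S = "{f\<in>prodA A. g f < \<beta>}"
    have "cofinal_prod A ?S" unfolding cofinal_prod_def using n by (auto simp: not_le)
    hence "cofinal_ord k (g ` ?S)" by (rule g2)
    then obtain y where "y \<in> g ` ?S" "\<beta> \<le> y" using b unfolding cofinal_ord_def by blast
    thus False by auto
  qed
  then obtain fb where fbA: "\<And>\<beta>. \<beta> < k \<Longrightarrow> fb \<beta> \<in> prodA A"
    and fbg: "\<And>\<beta> x. \<beta> < k \<Longrightarrow> x \<in> prodA A \<Longrightarrow> (fb \<beta> = x \<or> dom_lt A (fb \<beta>) x) \<Longrightarrow> \<beta> \<le> g x"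
    by metis
  have "\<forall>a\<in>A - A'. \<exists>b<a. \<forall>y\<in>(\<lambda>\<beta>. fb \<beta> a) ` {..<k}. y < b"
  proof
    fix a assume a: "a \<in> A - A'"
    show "\<exists>b<a. \<forall>y\<in>(\<lambda>\<beta>. fb \<beta> a) ` {..<k}. y < b"
    proof (rule regular_bound)
      show "regular a" using a assms(1) by auto
      show "k < a" using a by (auto simp: A'_def)
      show "(\<lambda>\<beta>. fb \<beta> a) ` {..<k} \<subseteq> {..<a}"
        using fbA a by (auto simp: prodA_def PiE_def Pi_def)
      show "(\<lambda>\<beta>. fb \<beta> a) ` {..<k} \<lesssim> {..<k}" by (rule image_lepoll)
    qed
  qed
  then obtain u where uA: "\<And>a. a \<in> A - A' \<Longrightarrow> u a < a"
    and ub: "\<And>a \<beta>. a \<in> A - A' \<Longrightarrow> \<beta> < k \<Longrightarrow> fb \<beta> a < u a"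
    by (metis imageI lessThan_iff)
  define F where "F = (\<lambda>f a. if a \<in> A' then f a else if a \<in> A then u a else undefined)"
  define g' where "g' = (\<lambda>f. g (F f))"
  define fb' where "fb' = (\<lambda>\<beta>. \<lambda>a. if a \<in> A' then (LEAST d. fb \<beta> a < d) else undefined)"
  have FA: "F f \<in> prodA A" if "f \<in> prodA A'" for f
    using that uA unfolding prodA_def F_def A'_def by (auto simp: PiE_def Pi_def extensional_def)
  have fb'A: "fb' \<beta> \<in> prodA A'" and fb'gt: "\<And>a. a \<in> A' \<Longrightarrow> fb \<beta> a < fb' \<beta> a"
    if b: "\<beta> < k" for \<beta>
  proof -
    have "\<exists>d. fb \<beta> a < d \<and> d < a" if "a \<in> A'" for a
      using regular_limit[of a "fb \<beta> a"] assms(1) fbA[OF b] that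
      by (auto simp: A'_def prodA_def PiE_def Pi_def)
    hence *: "fb \<beta> a < (LEAST d. fb \<beta> a < d) \<and> (LEAST d. fb \<beta> a < d) < a" if "a \<in> A'" for a
      using that by (meson LeastI Least_le order.strict_trans1)
    show "fb' \<beta> \<in> prodA A'" using * unfolding prodA_def fb'_def by auto
    show "\<And>a. a \<in> A' \<Longrightarrow> fb \<beta> a < fb' \<beta> a" using * unfolding fb'_def by auto
  qed
  have "tukey_ge A' k"
    unfolding tukey_ge_def
  proof (intro exI conjI allI impI)
    show "g' \<in> prodA A' \<rightarrow> {..<k}" using g1 FA unfolding g'_def by auto
    fix X assume X: "cofinal_prod A' X"
    show "cofinal_ord k (g' ` X)" unfolding cofinal_ord_def
    proof (intro conjI allI impI)
      show "g' ` X \<subseteq> {..<k}" using X g1 FA unfolding g'_def cofinal_prod_def by auto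
      fix \<beta> assume b: "\<beta> < k"
      obtain x where x: "x \<in> X" "fb' \<beta> = x \<or> dom_lt A' (fb' \<beta>) x"
        using X fb'A[OF b] unfolding cofinal_prod_def by blast
      have xA: "x \<in> prodA A'" using X x(1) unfolding cofinal_prod_def by auto
      have "fb \<beta> a < x a" if "a \<in> A'" for a
        using x(2) fb'gt[OF b that] that unfolding dom_lt_def by (metis order.strict_trans)
      hence "dom_lt A (fb \<beta>) (F x)"
        unfolding dom_lt_def F_def using ub[OF _ b] by auto
      hence "\<beta> \<le> g' x" unfolding g'_def using fbg[OF b FA[OF xA]] by blast
      thus "\<exists>y\<in>g' ` X. \<beta> \<le> y" using x(1) by blast
    qed
  qed
  thus ?thesis using kreg unfolding spec_def A'_def by auto
qed

end
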